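(* For every $n\ge1$, $$\left(h_{j-i}(X_j,X_{j+1},\dots,X_n)\right)_{1\le i,j\le n}\cdot\left(h_{1-i-j}(X_1,\dots,X_i)\right)_{1\le i,j\le n}=\left(h_{1-i-j}(X_1,\dots,X_n)\right)_{1\le i,j\le n}.$$
   Context: Extended complete homogeneous symmetric functions: for $k\ge0$, $h_k(X_1,\dots,X_m)=\sum_{l_1+\dots+l_m=k,\ l_i\ge0}X_1^{l_1}\cdots X_m^{l_m}$; for $k<0$, $h_k(X_1,\dots,X_m)=(-1)^{m+1}\sum_{l_1+\dots+l_m=k,\ l_i<0}X_1^{l_1}\cdots X_m^{l_m}$. *)

theory Defs
  imports Complex_Main
begin

definition hsym :: "int \<Rightarrow> (nat \<Rightarrow> 'a::field) \<Rightarrow> nat \<Rightarrow> nat \<Rightarrow> 'a" where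
  "hsym k X a b =
    (if k \<ge> 0 then
       (\<Sum>l\<in>{l. (\<forall>i. i \<notin> {a..b} \<longrightarrow> l i = 0) \<and> (\<forall>i\<in>{a..b}. l i \<ge> 0)
                  \<and> (\<Sum>i\<in>{a..b}. l i) = k}.
          \<Prod>i\<in>{a..b}. X i powi l i)
     else
       (-1) ^ (card {a..b} + 1) *
       (\<Sum>l\<in>{l. (\<forall>i. i \<notin> {a..b} \<longrightarrow> l i = 0) \<and> (\<forall>i\<in>{a..b}. l i < 0)
                  \<and> (\<Sum>i\<in>{a..b}. l i) = k}.
          \<Prod>i\<in>{a..b}. X i powi l i))"

end

theory Submission imports Defs "HOL-Library.FuncSet" begin

definition NS :: "nat \<Rightarrow> nat \<Rightarrow> int \<Rightarrow> (nat \<Rightarrow> int) set" where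
  "NS a b k = {l. (\<forall>i. i \<notin> {a..b} \<longrightarrow> l i = 0) \<and> (\<forall>i\<in>{a..b}. l i \<ge> 0) \<and> (\<Sum>i\<in>{a..b}. l i) = k}"
definition NG :: "nat \<Rightarrow> nat \<Rightarrow> int \<Rightarrow> (nat \<Rightarrow> int) set" where
  "NG a b k = {l. (\<forall>i. i \<notin> {a..b} \<longrightarrow> l i = 0) \<and> (\<forall>i\<in>{a..b}. l i < 0) \<and> (\<Sum>i\<in>{a..b}. l i) = k}"
definition mon :: "(nat \<Rightarrow> 'a::field) \<Rightarrow> nat \<Rightarrow> nat \<Rightarrow> (nat \<Rightarrow> int) \<Rightarrow> 'a" where
  "mon X a b l = (\<Prod>i\<in>{a..b}. X i powi l i)"

lemma hsym_pos: "k \<ge> 0 \<Longrightarrow> hsym k X a b = sum (mon X a b) (NS a b k)"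
  by (simp add: hsym_def NS_def mon_def)
lemma hsym_neg: "k < 0 \<Longrightarrow> hsym k X a b = (-1)^(card {a..b}+1) * sum (mon X a b) (NG a b k)"
  by (simp add: hsym_def NG_def mon_def)

lemma fin_box: "finite {l::nat\<Rightarrow>int. (\<forall>i. i\<notin>{a..b} \<longrightarrow> l i = 0) \<and> (\<forall>i\<in>{a..b}. l i \<in> {lo..hi})}"
proof -
  let ?f = "\<lambda>f i. if i\<in>{a..b} then f i else (0::int)"
  have "{l::nat\<Rightarrow>int. (\<forall>i. i\<notin>{a..b} \<longrightarrow> l i = 0) \<and> (\<forall>i\<in>{a..b}. l i \<in> {lo..hi})}
     \<subseteq> ?f ` (PiE {a..b} (\<lambda>_. {lo..hi}))"
  proof
    fix l assume l: "l \<in> {l::nat\<Rightarrow>int. (\<forall>i. i\<notin>{a..b} \<longrightarrow> l i = 0) \<and> (\<forall>i\<in>{a..b}. l i \<in> {lo..hi})}"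
    have "l = ?f (restrict l {a..b})" using l by (auto simp: fun_eq_iff restrict_apply')
    moreover have "restrict l {a..b} \<in> PiE {a..b} (\<lambda>_. {lo..hi})" using l by auto
    ultimately show "l \<in> ?f ` (PiE {a..b} (\<lambda>_. {lo..hi}))" by blast
  qed
  moreover have "finite (PiE {a..b} (\<lambda>_. {lo..hi::int}))" by (intro finite_PiE) auto
  ultimately show ?thesis by (meson finite_imageI finite_subset)
qed

lemma fin_NS: "finite (NS a b k)"
proof -
  have "NS a b k \<subseteq> {l::nat\<Rightarrow>int. (\<forall>i. i\<notin>{a..b} \<longrightarrow> l i = 0) \<and> (\<forall>i\<in>{a..b}. l i \<in> {0..k})}"
  proof
    fix l assume l: "l \<in> NS a b k"
    have "\<forall>i\<in>{a..b}. l i \<le> k"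
    proof
      fix i assume "i \<in> {a..b}"
      then have "l i \<le> sum l {a..b}" using l by (intro member_le_sum) (auto simp: NS_def)
      then show "l i \<le> k" using l by (simp add: NS_def)
    qed
    then show "l \<in> {l::nat\<Rightarrow>int. (\<forall>i. i\<notin>{a..b} \<longrightarrow> l i = 0) \<and> (\<forall>i\<in>{a..b}. l i \<in> {0..k})}"
      using l by (auto simp: NS_def)
  qed
  then show ?thesis using fin_box finite_subset by blast
qed

lemma fin_NG: "finite (NG a b k)"
proof -
  have "NG a b k \<subseteq> {l::nat\<Rightarrow>int. (\<forall>i. i\<notin>{a..b} \<longrightarrow> l i = 0) \<and> (\<forall>i\<in>{a..b}. l i \<in> {k..-1})}"
  proof
    fix l assume l: "l \<in> NG a b k"
    have "\<forall>i\<in>{a..b}. k \<le> l i"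
    proof
      fix i assume "i \<in> {a..b}"
      then have "(\<lambda>i. - l i) i \<le> sum (\<lambda>i. - l i) {a..b}" using l
        by (intro member_le_sum) (auto simp: NG_def less_imp_le)
      then show "k \<le> l i" using l by (simp add: NG_def sum_negf)
    qed
    then show "l \<in> {l::nat\<Rightarrow>int. (\<forall>i. i\<notin>{a..b} \<longrightarrow> l i = 0) \<and> (\<forall>i\<in>{a..b}. l i \<in> {k..-1})}"
      using l by (auto simp: NG_def)
  qed
  then show ?thesis using fin_box finite_subset by blast
qed

lemma ivl_ins: "(a::nat) < b \<Longrightarrow> {a..b} = insert b {a..b-1}"
proof -
  assume "a < b"
  then obtain c where "b = Suc c" by (cases b) auto
  then show ?thesis using \<open>a < b\<close> by (simp add: atLeastAtMostSuc_conv)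
qed
lemma sum_split: "a < b \<Longrightarrow> sum (l::nat\<Rightarrow>int) {a..b} = l b + sum l {a..b-1}"
  by (simp add: ivl_ins)
lemma sum_upd: "a < b \<Longrightarrow> sum ((l::nat\<Rightarrow>int)(b:=v)) {a..b} = v + sum l {a..b-1}"
  by (simp add: ivl_ins, intro sum.cong) auto
lemma mon_split: "a < b \<Longrightarrow> mon X a b l = X b powi l b * mon X a (b-1) l"
  by (simp add: ivl_ins mon_def)
lemma mon_upd: "a < b \<Longrightarrow> mon X a b (l(b:=v)) = X b powi v * mon X a (b-1) l"
proof -
  assume ab: "a < b"
  have "(\<Prod>i\<in>{a..b-1}. X i powi (l(b:=v)) i) = (\<Prod>i\<in>{a..b-1}. X i powi l i)"
    using ab by (intro prod.cong) auto
  then show ?thesis using ab by (simp add: ivl_ins mon_def)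
qed

lemma hsym_zero: "hsym 0 X a b = 1"
proof -
  have "NS a b 0 = {\<lambda>_. 0}"
  proof (rule set_eqI, rule iffI)
    fix l assume l: "l \<in> NS a b 0"
    then have "\<forall>i\<in>{a..b}. l i = 0" using sum_nonneg_eq_0_iff[of "{a..b}" l] by (auto simp: NS_def)
    then show "l \<in> {\<lambda>_. 0}" using l by (auto simp: NS_def fun_eq_iff)
  qed (auto simp: NS_def)
  then show ?thesis by (simp add: hsym_pos mon_def)
qed

lemma hsym_single: "hsym r X a a = X a powi r"
proof (cases "r \<ge> 0")
  case True
  have "NS a a r = {(\<lambda>_. 0)(a:=r)}" using True by (auto simp: NS_def fun_eq_iff)
  then show ?thesis using True by (simp add: hsym_pos mon_def)
next
  case False
  have "NG a a r = {(\<lambda>_. 0)(a:=r)}" using False by (auto simp: NG_def fun_eq_iff)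
  then show ?thesis using False by (simp add: hsym_neg mon_def)
qed

lemma hsym_vanish: "r < 0 \<Longrightarrow> int (Suc b - a) + r > 0 \<Longrightarrow> hsym r X a b = 0"
proof -
  assume r: "r < 0" "int (Suc b - a) + r > 0"
  have "NG a b r = {}"
  proof (rule ccontr)
    assume "NG a b r \<noteq> {}"
    then obtain l where l: "l \<in> NG a b r" by blast
    have "sum l {a..b} \<le> sum (\<lambda>_. -1) {a..b}" using l
    proof (intro sum_mono)
      fix i assume "i \<in> {a..b}"
      then have "l i < 0" using l by (simp add: NG_def)
      then show "l i \<le> -1" by simp
    qed
    then show False using l r by (simp add: NG_def)
  qed
  then show ?thesis using r by (simp add: hsym_neg)
qed

lemma NS_rec:
  assumes ab: "a < b" and k: "k \<ge> 1" and Xb: "X b \<noteq> 0"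
  shows "sum (mon X a b) (NS a b k) = sum (mon X a (b-1)) (NS a (b-1) k) + X b * sum (mon X a b) (NS a b (k-1))"
proof -
  have bin: "b \<in> {a..b}" "b \<notin> {a..b-1}" using ab by auto
  have sub: "\<And>i. i \<notin> {a..b} \<Longrightarrow> i \<notin> {a..b-1}" by auto
  have sub2: "\<And>i. i \<in> {a..b-1} \<Longrightarrow> i \<in> {a..b}" by auto
  have out: "\<And>i. i \<notin> {a..b-1} \<Longrightarrow> i = b \<or> i \<notin> {a..b}" using ivl_ins[OF ab] by auto
  have spl: "NS a b k = {l\<in>NS a b k. l b = 0} \<union> {l\<in>NS a b k. l b \<ge> 1}"
  proof -
    { fix l assume "l \<in> NS a b k"
      then have "l b \<ge> 0" using bin by (simp add: NS_def)
      then have "l b = 0 \<or> l b \<ge> 1" by linarith }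
    then show ?thesis by auto
  qed
  have e1: "{l\<in>NS a b k. l b = 0} = NS a (b-1) k"
  proof (rule set_eqI, rule iffI)
    fix l assume l: "l \<in> {l\<in>NS a b k. l b = 0}"
    have "\<forall>i. i \<notin> {a..b-1} \<longrightarrow> l i = 0"
    proof (intro allI impI)
      fix i assume "i \<notin> {a..b-1}"
      then have "i = b \<or> i \<notin> {a..b}" by (rule out)
      then show "l i = 0" using l by (auto simp: NS_def)
    qed
    then show "l \<in> NS a (b-1) k" using l sum_split[OF ab, of l] sub2
      by (auto simp: NS_def)
  next
    fix l assume l: "l \<in> NS a (b-1) k"
    then have "l b = 0" using bin by (simp add: NS_def)
    then show "l \<in> {l\<in>NS a b k. l b = 0}" using l sum_split[OF ab, of l] sub ab ivl_ins[OF ab]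
      by (auto simp: NS_def)
  qed
  have s1: "sum (mon X a b) {l\<in>NS a b k. l b = 0} = sum (mon X a (b-1)) (NS a (b-1) k)"
    unfolding e1
  proof (intro sum.cong refl)
    fix l assume "l \<in> NS a (b-1) k"
    then have "l b = 0" using bin by (simp add: NS_def)
    then show "mon X a b l = mon X a (b-1) l" by (simp add: mon_split[OF ab])
  qed
  have s2: "sum (mon X a b) {l\<in>NS a b k. l b \<ge> 1} = sum (\<lambda>l. X b * mon X a b l) (NS a b (k-1))"
  proof (rule sum.reindex_bij_witness[where j = "\<lambda>l. l(b := l b - 1)" and i = "\<lambda>l. l(b := l b + 1)"])
    fix l assume l: "l \<in> {l\<in>NS a b k. l b \<ge> 1}"
    show "(l(b := l b - 1))(b := (l(b := l b - 1)) b + 1) = l" by auto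
    show "l(b := l b - 1) \<in> NS a b (k-1)" using l sum_upd[OF ab, of l] sum_split[OF ab, of l] bin
      by (auto simp: NS_def)
    have "X b powi l b = X b * X b powi (l b - 1)"
      using power_int_add_1'[of "X b" "l b - 1"] Xb by simp
    then show "X b * mon X a b (l(b := l b - 1)) = mon X a b l"
      unfolding mon_upd[OF ab] mon_split[OF ab, of X l] by (simp add: mult.assoc)
  next
    fix l assume l: "l \<in> NS a b (k-1)"
    show "(l(b := l b + 1))(b := (l(b := l b + 1)) b - 1) = l" by auto
    show "l(b := l b + 1) \<in> {l\<in>NS a b k. l b \<ge> 1}" using l sum_upd[OF ab, of l] sum_split[OF ab, of l] bin
      by (auto simp: NS_def)
  qed
  have "sum (mon X a b) (NS a b k) = sum (mon X a b) {l\<in>NS a b k. l b = 0} + sum (mon X a b) {l\<in>NS a b k. l b \<ge> 1}"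
    by (subst spl, rule sum.union_disjoint) (auto intro: finite_subset[OF _ fin_NS])
  then show ?thesis using s1 s2 by (simp add: sum_distrib_left)
qed

lemma NG_rec:
  assumes ab: "a < b" and Xb: "X b \<noteq> 0"
  shows "X b * sum (mon X a b) (NG a b (r-1)) = sum (mon X a b) (NG a b r) + sum (mon X a (b-1)) (NG a (b-1) r)"
proof -
  have bin: "b \<in> {a..b}" "b \<notin> {a..b-1}" using ab by auto
  have sub: "\<And>i. i \<notin> {a..b} \<Longrightarrow> i \<notin> {a..b-1}" by auto
  have sub2: "\<And>i. i \<in> {a..b-1} \<Longrightarrow> i \<in> {a..b}" by auto
  have out: "\<And>i. i \<notin> {a..b-1} \<Longrightarrow> i = b \<or> i \<notin> {a..b}" using ivl_ins[OF ab] by auto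
  have spl: "NG a b (r-1) = {l\<in>NG a b (r-1). l b \<le> -2} \<union> {l\<in>NG a b (r-1). l b = -1}"
  proof -
    { fix l assume "l \<in> NG a b (r-1)"
      then have "l b < 0" using bin by (simp add: NG_def)
      then have "l b \<le> -2 \<or> l b = -1" by linarith }
    then show ?thesis by auto
  qed
  have s1: "sum (\<lambda>l. X b * mon X a b l) {l\<in>NG a b (r-1). l b \<le> -2} = sum (mon X a b) (NG a b r)"
  proof (rule sum.reindex_bij_witness[where j = "\<lambda>l. l(b := l b + 1)" and i = "\<lambda>l. l(b := l b - 1)"])
    fix l assume l: "l \<in> {l\<in>NG a b (r-1). l b \<le> -2}"
    show "(l(b := l b + 1))(b := (l(b := l b + 1)) b - 1) = l" by auto
    show "l(b := l b + 1) \<in> NG a b r" using l sum_upd[OF ab, of l] sum_split[OF ab, of l] bin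
      by (auto simp: NG_def)
    have "X b powi (l b + 1) = X b * X b powi l b"
      using power_int_add_1'[of "X b" "l b"] Xb by simp
    then show "mon X a b (l(b := l b + 1)) = X b * mon X a b l"
      unfolding mon_upd[OF ab] mon_split[OF ab, of X l] by (simp add: mult.assoc)
  next
    fix l assume l: "l \<in> NG a b r"
    show "(l(b := l b - 1))(b := (l(b := l b - 1)) b + 1) = l" by auto
    have "l b < 0" using l bin by (simp add: NG_def)
    then have "l b < 1" "1 + l b \<le> 0" by simp_all
    then show "l(b := l b - 1) \<in> {l\<in>NG a b (r-1). l b \<le> -2}" using l sum_upd[OF ab, of l] sum_split[OF ab, of l] bin
      by (auto simp: NG_def)
  qed
  have s2: "sum (\<lambda>l. X b * mon X a b l) {l\<in>NG a b (r-1). l b = -1} = sum (mon X a (b-1)) (NG a (b-1) r)"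
  proof (rule sum.reindex_bij_witness[where j = "\<lambda>l. l(b := 0)" and i = "\<lambda>l. l(b := -1)"])
    fix l assume l: "l \<in> {l\<in>NG a b (r-1). l b = -1}"
    show "(l(b := 0))(b := -1) = l" using l by auto
    have "\<forall>i. i \<notin> {a..b-1} \<longrightarrow> (l(b:=0)) i = 0"
    proof (intro allI impI)
      fix i assume "i \<notin> {a..b-1}"
      then have "i = b \<or> i \<notin> {a..b}" by (rule out)
      then show "(l(b:=0)) i = 0" using l by (auto simp: NG_def)
    qed
    moreover have "sum (l(b:=0)) {a..b-1} = sum l {a..b-1}" using bin by (intro sum.cong) auto
    ultimately show "l(b := 0) \<in> NG a (b-1) r" using l sum_split[OF ab, of l] bin sub2
      by (auto simp: NG_def)
    have "X b * X b powi (-1) = 1" using Xb by (simp add: power_int_minus)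
    then have "X b * mon X a b l = mon X a (b-1) l" using l
      by (simp add: mon_split[OF ab] flip: mult.assoc)
    moreover have "mon X a (b-1) (l(b:=0)) = mon X a (b-1) l" unfolding mon_def
      using bin by (intro prod.cong) auto
    ultimately show "mon X a (b-1) (l(b := 0)) = X b * mon X a b l" by simp
  next
    fix l assume l: "l \<in> NG a (b-1) r"
    then have "l b = 0" using bin by (simp add: NG_def)
    then show "(l(b := -1))(b := 0) = l" by auto
    show "l(b := -1) \<in> {l\<in>NG a b (r-1). l b = -1}" using l sum_upd[OF ab, of l] bin sub ivl_ins[OF ab]
      by (auto simp: NG_def)
  qed
  have "sum (\<lambda>l. X b * mon X a b l) (NG a b (r-1)) = sum (\<lambda>l. X b * mon X a b l) {l\<in>NG a b (r-1). l b \<le> -2} + sum (\<lambda>l. X b * mon X a b l) {l\<in>NG a b (r-1). l b = -1}"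
    by (subst spl, rule sum.union_disjoint) (auto intro: finite_subset[OF _ fin_NG])
  then show ?thesis using s1 s2 by (simp add: sum_distrib_left)
qed

lemma hrec:
  assumes ab: "a < b" and Xb: "X b \<noteq> 0"
  shows "hsym r X a b = hsym r X a (b-1) + X b * hsym (r-1) X a b"
proof -
  consider "r \<ge> 1" | "r = 0" | "r < 0" by linarith
  then show ?thesis
  proof cases
    case 1
    then show ?thesis using NS_rec[of a b r X, OF ab 1 Xb] by (simp add: hsym_pos)
  next
    case 2
    have "hsym (-1) X a b = 0" using ab by (intro hsym_vanish) auto
    then show ?thesis using 2 by (simp add: hsym_zero)
  next
    case 3
    define m where "m = b - a"
    have c1: "card {a..b} = m + 1" "card {a..b-1} = m" using ab by (auto simp: m_def)
    have e: "X b * sum (mon X a b) (NG a b (r-1)) = sum (mon X a b) (NG a b r) + sum (mon X a (b-1)) (NG a (b-1) r)"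
      by (rule NG_rec[of a b X r, OF ab Xb])
    have "hsym r X a (b-1) + X b * hsym (r-1) X a b
       = (-1)^(m+1) * sum (mon X a (b-1)) (NG a (b-1) r) + (-1)^(m+2) * (X b * sum (mon X a b) (NG a b (r-1)))"
      using 3 c1 by (simp add: hsym_neg m_def)
    also have "\<dots> = (-1)^(m+2) * sum (mon X a b) (NG a b r)"
      unfolding e by (simp add: algebra_simps)
    also have "\<dots> = hsym r X a b" using 3 c1 by (simp add: hsym_neg)
    finally show ?thesis by simp
  qed
qed

lemma main_aux:
  fixes X :: "nat \<Rightarrow> 'a::field"
  shows "n \<ge> 1 \<Longrightarrow> (\<forall>i\<in>{1..n}. X i \<noteq> 0) \<Longrightarrow> i \<in> {1..n} \<Longrightarrow>
    (\<Sum>k\<in>{i..n}. hsym (int k - int i) X k n * hsym (1 - int k - int j) X 1 k) = hsym (1 - int i - int j) X 1 n"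
proof (induction n arbitrary: i)
  case 0
  then show ?case by simp
next
  case (Suc m)
  define n where "n = Suc m"
  have base: "(\<Sum>k\<in>{n..n}. hsym (int k - int n) X k n * hsym (1 - int k - int j) X 1 k) = hsym (1 - int n - int j) X 1 n"
    by (simp add: hsym_zero)
  show ?case
  proof (cases "m = 0")
    case True
    then show ?thesis using base Suc.prems by (simp add: n_def)
  next
    case False
    have Xn: "X n \<noteq> 0" using Suc.prems by (simp add: n_def)
    have IHm: "\<And>i. i \<in> {1..m} \<Longrightarrow> (\<Sum>k\<in>{i..m}. hsym (int k - int i) X k m * hsym (1 - int k - int j) X 1 k) = hsym (1 - int i - int j) X 1 m"
      using Suc.IH Suc.prems False by auto
    have "\<forall>i. i \<in> {1..n} \<longrightarrow> n - i = d \<longrightarrow>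
      (\<Sum>k\<in>{i..n}. hsym (int k - int i) X k n * hsym (1 - int k - int j) X 1 k) = hsym (1 - int i - int j) X 1 n" for d
    proof (induction d)
      case 0
      show ?case
      proof (intro allI impI)
        fix i assume "i \<in> {1..n}" "n - i = 0"
        then have "i = n" by auto
        then show "(\<Sum>k\<in>{i..n}. hsym (int k - int i) X k n * hsym (1 - int k - int j) X 1 k) = hsym (1 - int i - int j) X 1 n"
          using base by simp
      qed
    next
      case (Suc d)
      show ?case
      proof (intro allI impI)
        fix i assume i: "i \<in> {1..n}" "n - i = Suc d"
        have iH: "(\<Sum>k\<in>{i+1..n}. hsym (int k - int (i+1)) X k n * hsym (1 - int k - int j) X 1 k) = hsym (1 - int (i+1) - int j) X 1 n"
          by (rule Suc.IH[rule_format]) (use i in auto)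
        have im: "i \<in> {1..m}" "i < n" using i by (auto simp: n_def)
        have nm: "n - 1 = m" by (simp add: n_def)
        let ?b = "\<lambda>k. hsym (1 - int k - int j) X 1 k"
        have s1: "{i..n} = insert n {i..m}" using im by (auto simp: n_def)
        have t1: "\<And>k. k \<in> {i..m} \<Longrightarrow> hsym (int k - int i) X k n * ?b k
            = hsym (int k - int i) X k m * ?b k + X n * (hsym (int k - int (i+1)) X k n * ?b k)"
        proof -
          fix k assume k: "k \<in> {i..m}"
          then have "k < n" by (auto simp: n_def)
          from hrec[of k n X "int k - int i", OF this Xn] nm
          show "hsym (int k - int i) X k n * ?b k
            = hsym (int k - int i) X k m * ?b k + X n * (hsym (int k - int (i+1)) X k n * ?b k)"
            by (simp add: algebra_simps)
        qed
        have t2: "hsym (int n - int i) X n n = X n * hsym (int n - int (i+1)) X n n"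
          using power_int_add_1'[of "X n" "int n - int (i+1)"] Xn by (simp add: hsym_single)
        have t1s: "(\<Sum>k\<in>{i..m}. hsym (int k - int i) X k n * ?b k) = (\<Sum>k\<in>{i..m}. hsym (int k - int i) X k m * ?b k) + X n * (\<Sum>k\<in>{i..m}. hsym (int k - int (i+1)) X k n * ?b k)"
          by (simp only: sum.cong[OF refl t1] sum.distrib sum_distrib_left)
        have "(\<Sum>k\<in>{i..n}. hsym (int k - int i) X k n * ?b k)
            = hsym (int n - int i) X n n * ?b n + (\<Sum>k\<in>{i..m}. hsym (int k - int i) X k n * ?b k)"
          unfolding s1 by (simp add: n_def)
        also have "\<dots> = (\<Sum>k\<in>{i..m}. hsym (int k - int i) X k m * ?b k)
            + X n * (hsym (int n - int (i+1)) X n n * ?b n + (\<Sum>k\<in>{i..m}. hsym (int k - int (i+1)) X k n * ?b k))"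
          by (simp only: t1s t2) (simp add: ring_distribs mult.assoc add_ac)
        also have "hsym (int n - int (i+1)) X n n * ?b n + (\<Sum>k\<in>{i..m}. hsym (int k - int (i+1)) X k n * ?b k)
            = (\<Sum>k\<in>{i..n}. hsym (int k - int (i+1)) X k n * ?b k)"
          unfolding s1 by (simp add: n_def)
        also have "\<dots> = (\<Sum>k\<in>{i+1..n}. hsym (int k - int (i+1)) X k n * ?b k)"
        proof -
          have s2: "{i..n} = insert i {i+1..n}" using im by auto
          have "hsym (int i - int (i+1)) X i n = 0" using im by (intro hsym_vanish) auto
          then show ?thesis unfolding s2 by simp
        qed
        also have "\<dots> = hsym (1 - int (i+1) - int j) X 1 n" by (rule iH)
        also have "(\<Sum>k\<in>{i..m}. hsym (int k - int i) X k m * ?b k) = hsym (1 - int i - int j) X 1 m"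
          by (rule IHm[OF im(1)])
        also have "hsym (1 - int i - int j) X 1 m + X n * hsym (1 - int (i+1) - int j) X 1 n
            = hsym (1 - int i - int j) X 1 n"
          using hrec[of 1 n X "1 - int i - int j", OF _ Xn] im nm by (simp add: algebra_simps)
        finally show "(\<Sum>k\<in>{i..n}. hsym (int k - int i) X k n * ?b k) = hsym (1 - int i - int j) X 1 n" .
      qed
    qed
    then show ?thesis using Suc.prems by (simp add: n_def)
  qed
qed

theorem mainTheorem13:
  fixes X :: "nat \<Rightarrow> 'a::field" and n :: nat
  assumes "n \<ge> 1"
    and "\<And>i. i \<in> {1..n} \<Longrightarrow> X i \<noteq> 0"
  shows "\<forall>i\<in>{1..n}. \<forall>j\<in>{1..n}.
           (\<Sum>k\<in>{1..n}. hsym (int k - int i) X k n * hsym (1 - int k - int j) X 1 k)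
           = hsym (1 - int i - int j) X 1 n"
proof (intro ballI)
  fix i j assume i: "i \<in> {1..n}" and "j \<in> {1..n}"
  have s: "{1..n} = {1..<i} \<union> {i..n}" using i by auto
  have z: "(\<Sum>k\<in>{1..<i}. hsym (int k - int i) X k n * hsym (1 - int k - int j) X 1 k) = 0"
  proof (intro sum.neutral ballI)
    fix k assume "k \<in> {1..<i}"
    then have "hsym (int k - int i) X k n = 0" using i by (intro hsym_vanish) auto
    then show "hsym (int k - int i) X k n * hsym (1 - int k - int j) X 1 k = 0" by simp
  qed
  have "(\<Sum>k\<in>{1..n}. hsym (int k - int i) X k n * hsym (1 - int k - int j) X 1 k)
     = (\<Sum>k\<in>{1..<i}. hsym (int k - int i) X k n * hsym (1 - int k - int j) X 1 k)
     + (\<Sum>k\<in>{i..n}. hsym (int k - int i) X k n * hsym (1 - int k - int j) X 1 k)"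
    unfolding s by (rule sum.union_disjoint) auto
  also have "\<dots> = hsym (1 - int i - int j) X 1 n"
    using z main_aux[of n X i j] assms i by auto
  finally show "(\<Sum>k\<in>{1..n}. hsym (int k - int i) X k n * hsym (1 - int k - int j) X 1 k)
           = hsym (1 - int i - int j) X 1 n" .
qed

end
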